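(* Let $0<\epsilon\le 1/2$. Then $r_{\mathrm{bif}}(-\epsilon)\le 1/4+\epsilon-\epsilon^2$.
   Context: $f_c(z)=z^2+c$, extended to $\widehat{\mathbb{C}}$ by $f_c(\infty)=\infty$. For $c\in\mathbb{C}$, $r\ge0$, $G_{c,r}$ is the semigroup under composition generated by $\{f_{c'}:|c'-c|\le r\}$. A minimal set of a polynomial semigroup $G$ is a minimal element, with respect to inclusion, of the family of non-empty compact $L\subset\widehat{\mathbb{C}}$ with $g(L)\subset L$ for all $g\in G$; it is planar if $\infty\notin L$. The bifurcation radius $r_{\mathrm{bif}}(c)$ is the supremum of those $r\ge0$ for which $G_{c,r}$ has a planar minimal set (equivalently the infimum of those $r\ge0$ for which $G_{c,r}$ has no planar minimal set); by prior work this value is attained and $G_{c,r}$ has a planar minimal set iff $r\le r_{\mathrm{bif}}(c)$. *)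

theory Defs
  imports "HOL-Analysis.Analysis"
begin

definition quad :: "complex \<Rightarrow> complex \<Rightarrow> complex" where
  "quad c z = z\<^sup>2 + c"

inductive_set gen_semigroup :: "('a \<Rightarrow> 'a) set \<Rightarrow> ('a \<Rightarrow> 'a) set"
  for S :: "('a \<Rightarrow> 'a) set" where
  gen: "f \<in> S \<Longrightarrow> f \<in> gen_semigroup S"
| comp: "g \<in> gen_semigroup S \<Longrightarrow> h \<in> gen_semigroup S \<Longrightarrow> g \<circ> h \<in> gen_semigroup S"

definition G :: "complex \<Rightarrow> real \<Rightarrow> (complex \<Rightarrow> complex) set" where
  "G c r = gen_semigroup {quad c' | c'. cmod (c' - c) \<le> r}"

definition invariant_compact :: "(complex \<Rightarrow> complex) set \<Rightarrow> complex set \<Rightarrow> bool" where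
  "invariant_compact Gr L \<longleftrightarrow> L \<noteq> {} \<and> compact L \<and> (\<forall>g\<in>Gr. g ` L \<subseteq> L)"

(* planar minimal set: minimal set of the semigroup on the Riemann sphere not containing \<infinity>.
   Any compact invariant subset of a planar set is planar, so minimality only needs to be
   tested against subsets of L, all of which lie in the plane. *)
definition planar_minimal_set :: "(complex \<Rightarrow> complex) set \<Rightarrow> complex set \<Rightarrow> bool" where
  "planar_minimal_set Gr L \<longleftrightarrow> invariant_compact Gr L \<and>
     (\<forall>K. K \<subseteq> L \<and> invariant_compact Gr K \<longrightarrow> K = L)"

definition r_bif :: "complex \<Rightarrow> real" where
  "r_bif c = Sup {r. r \<ge> 0 \<and> (\<exists>L. planar_minimal_set (G c r) L)}"

end

theory Submission
  imports Defs
begin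

lemma sgn_w: "(w::complex) = of_real (cmod w) * sgn w"
  by (cases "w = 0") (simp_all add: sgn_div_norm scaleR_conv_of_real)

lemma norm_ofr_sgn: "w \<noteq> 0 \<Longrightarrow> cmod (complex_of_real x * sgn w) = \<bar>x\<bar>"
  by (simp add: norm_mult norm_sgn)

lemma norm_add_sgn:
  fixes w :: complex assumes "r \<ge> 0"
  shows "cmod (w + of_real r * sgn w) = cmod w + r \<or> w = 0"
proof (cases "w = 0")
  case False
  have "w + of_real r * sgn w = of_real (cmod w + r) * sgn w"
    using False by (simp add: sgn_w distrib_right)
  then show ?thesis using False assms norm_ofr_sgn[OF False, of "cmod w + r"] by simp
qed simp

lemma norm_sub_sgn:
  fixes w :: complex assumes "r \<le> cmod w" "w \<noteq> 0"
  shows "cmod (w - of_real r * sgn w) = cmod w - r"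
proof -
  have "w - of_real r * sgn w = of_real (cmod w - r) * sgn w"
    using assms by (simp add: sgn_w left_diff_distrib)
  then show ?thesis using assms norm_ofr_sgn[OF assms(2), of "cmod w - r"] by simp
qed

lemma core:
  fixes \<epsilon> r :: real and L :: "complex set"
  assumes e0: "0 < \<epsilon>" and e1: "\<epsilon> \<le> 1/2" and rb: "r > 1/4 + \<epsilon> - \<epsilon>\<^sup>2"
    and Lne: "L \<noteq> {}" and Lc: "compact L"
    and inv: "\<And>c z. cmod (c + of_real \<epsilon>) \<le> r \<Longrightarrow> z \<in> L \<Longrightarrow> z\<^sup>2 + c \<in> L"
  shows False
proof -
  have "\<epsilon>\<^sup>2 \<le> \<epsilon>" using e0 e1 by (simp add: power2_eq_square mult_le_cancel_left1)
  have "\<epsilon>\<^sup>2 \<le> 1/4" proof -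
    have "\<epsilon>*\<epsilon> \<le> (1/2)*(1/2)" by (rule mult_mono) (use e0 e1 in auto)
    then show ?thesis by (simp add: power2_eq_square)
  qed
  define \<delta> where "\<delta> = r - \<epsilon>"
  have d0: "\<delta> > 0" using rb \<open>\<epsilon>\<^sup>2 \<le> 1/4\<close> by (simp add: \<delta>_def)
  have r4: "r > 1/4" using rb \<open>\<epsilon>\<^sup>2 \<le> \<epsilon>\<close> by simp
  have re: "\<epsilon> \<le> r" using d0 by (simp add: \<delta>_def)
  have r0: "r \<ge> 0" using re e0 by simp
  obtain z0 where z0: "z0 \<in> L" and z0m: "\<And>y. y \<in> L \<Longrightarrow> cmod y \<le> cmod z0"
    using continuous_attains_sup[OF Lc Lne, of cmod] by (auto intro: continuous_intros)
  define M where "M = cmod z0"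
  have M1: "M < 1"
  proof -
    define u where "u = (if z0\<^sup>2 = 0 then 1 else sgn (z0\<^sup>2))"
    have un: "cmod u = 1" by (simp add: u_def norm_sgn)
    define c where "c = of_real r * u - of_real \<epsilon>"
    have "cmod (c + of_real \<epsilon>) \<le> r" using r0 un by (simp add: c_def norm_mult)
    then have "z0\<^sup>2 + c \<in> L" using inv z0 by blast
    then have A: "cmod (z0\<^sup>2 + c) \<le> M" using z0m M_def by blast
    have "cmod (z0\<^sup>2 + of_real r * u) = M\<^sup>2 + r"
      using norm_add_sgn[OF r0, of "z0\<^sup>2"] r0 by (auto simp: M_def norm_power u_def)
    moreover have "cmod (z0\<^sup>2 + of_real r * u) \<le> cmod (z0\<^sup>2 + c) + \<epsilon>"
      using norm_triangle_ineq[of "z0\<^sup>2 + c" "of_real \<epsilon>"] e0 by (simp add: c_def)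
    ultimately have "M\<^sup>2 + \<delta> \<le> M" using A by (simp add: \<delta>_def)
    then show ?thesis using d0 M_def
      by (smt (verit) norm_ge_zero power2_eq_square mult_le_cancel_left1)
  qed
  obtain z1 where z1: "z1 \<in> L" and z1m: "\<And>y. y \<in> L \<Longrightarrow> cmod z1 \<le> cmod y"
    using continuous_attains_inf[OF Lc Lne, of cmod] by (auto intro: continuous_intros)
  have zero: "0 \<in> L"
  proof (cases "cmod (z1\<^sup>2 - of_real \<epsilon>) \<le> r")
    case True
    have "cmod ((- z1\<^sup>2) + of_real \<epsilon>) \<le> r" using True by (simp add: norm_minus_commute)
    from inv[OF this z1] show ?thesis by simp
  next
    case False
    define b where "b = z1\<^sup>2 - of_real \<epsilon>"
    define m where "m = cmod z1"
    have bn: "b \<noteq> 0" using False r0 b_def by auto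
    define c where "c = - of_real \<epsilon> - of_real r * sgn b"
    have "cmod (c + of_real \<epsilon>) \<le> r" using r0 by (simp add: c_def norm_mult norm_sgn)
    then have "z1\<^sup>2 + c \<in> L" using inv z1 by blast
    then have A: "m \<le> cmod (z1\<^sup>2 + c)" using z1m m_def by blast
    have eq: "z1\<^sup>2 + c = b - of_real r * sgn b" by (simp add: c_def b_def)
    have "cmod (b - of_real r * sgn b) = cmod b - r"
      by (rule norm_sub_sgn) (use False bn b_def in auto)
    then have "cmod (z1\<^sup>2 + c) = cmod b - r" by (simp only: eq)
    moreover have "cmod b \<le> m\<^sup>2 + \<epsilon>" unfolding b_def m_def
      using norm_triangle_ineq4[of "z1\<^sup>2" "of_real \<epsilon>"] e0 by (simp add: norm_power)
    ultimately have B: "m \<le> m\<^sup>2 - \<delta>" using A by (simp add: \<delta>_def)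
    have "m \<le> M" using z1m z0 M_def m_def by blast
    have "m \<ge> 0" by (simp add: m_def)
    then have "m*m \<le> m*1" using \<open>m \<le> M\<close> M1
      by (intro mult_left_mono) auto
    then have "m\<^sup>2 \<le> m" by (simp add: power2_eq_square)
    then show ?thesis using B d0 by simp
  qed
  define \<omega> where "\<omega> = Complex (-1/2) (sqrt 3/2)"
  have s3: "sqrt 3 * sqrt 3 = 3" by simp
  have w2: "\<omega>\<^sup>2 = cnj \<omega>" unfolding \<omega>_def
    by (simp add: complex_eq_iff power2_eq_square s3)
  have w2': "(cnj \<omega>)\<^sup>2 = \<omega>" unfolding \<omega>_def
    by (simp add: complex_eq_iff power2_eq_square s3)
  have wn: "cmod \<omega> = 1" unfolding \<omega>_def
    by (simp add: complex_norm power2_eq_square s3 power_divide)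
  have key: "(\<epsilon> - r/2)\<^sup>2 + (r * sqrt 3 / 2)\<^sup>2 \<le> r\<^sup>2"
  proof -
    have "(\<epsilon> - r/2)\<^sup>2 + (r * sqrt 3 / 2)\<^sup>2 = \<epsilon>*\<epsilon> - \<epsilon>*r + r\<^sup>2"
      by (simp add: power2_eq_square field_simps s3)
    moreover have "\<epsilon>*\<epsilon> \<le> \<epsilon>*r" using re e0 by (intro mult_left_mono) auto
    ultimately show ?thesis by simp
  qed
  have c1: "cmod (of_real r * cnj \<omega> + of_real \<epsilon>) \<le> r"
  proof -
    have "of_real r * cnj \<omega> + of_real \<epsilon> = Complex (\<epsilon> - r/2) (- (r * sqrt 3 / 2))"
      by (simp add: \<omega>_def complex_eq_iff)
    then show ?thesis using key r0
      by (simp add: complex_norm real_sqrt_le_iff) (metis real_sqrt_le_mono real_sqrt_abs abs_of_nonneg)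
  qed
  have c2: "cmod (of_real r * \<omega> + of_real \<epsilon>) \<le> r"
  proof -
    have "of_real r * \<omega> + of_real \<epsilon> = Complex (\<epsilon> - r/2) (r * sqrt 3 / 2)"
      by (simp add: \<omega>_def complex_eq_iff)
    then show ?thesis using key r0
      by (simp add: complex_norm real_sqrt_le_iff) (metis real_sqrt_le_mono real_sqrt_abs abs_of_nonneg)
  qed
  define R where "R = {z. \<exists>t\<ge>0. z = of_real t * \<omega> \<or> z = of_real t * cnj \<omega>}"
  define S where "S = cmod ` (L \<inter> R)"
  obtain B where B: "\<And>z. z \<in> L \<Longrightarrow> cmod z \<le> B"
    using compact_imp_bounded[OF Lc] unfolding bounded_iff by blast
  have bS: "bdd_above S" unfolding S_def bdd_above_def using B by blast
  have "0 \<in> R" unfolding R_def by force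
  then have S0: "0 \<in> S" unfolding S_def using zero by force
  then have Sne: "S \<noteq> {}" by blast
  define \<eta> where "\<eta> = (r - 1/4)/2"
  have eta: "\<eta> > 0" using r4 by (simp add: \<eta>_def)
  have "Sup S - \<eta> < Sup S" using eta by simp
  then obtain s where "s \<in> S" "Sup S - \<eta> < s" using less_cSup_iff[OF Sne bS] by blast
  then obtain z t where zL: "z \<in> L" and t0: "t \<ge> 0" and zt: "z = of_real t * \<omega> \<or> z = of_real t * cnj \<omega>"
     and zs: "Sup S - \<eta> < cmod z"
    unfolding S_def R_def by blast
  have tz: "cmod z = t" using zt t0 wn by (auto simp: norm_mult)
  obtain w where wL: "w \<in> L" and wR: "w \<in> R" and wn': "cmod w = t\<^sup>2 + r"
  proof (cases "z = of_real t * \<omega>")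
    case True
    have "z\<^sup>2 + of_real r * cnj \<omega> = of_real (t\<^sup>2 + r) * cnj \<omega>"
      using True by (simp add: power_mult_distrib w2 distrib_right)
    moreover have "z\<^sup>2 + of_real r * cnj \<omega> \<in> L" using inv[OF c1 zL] .
    moreover have "of_real (t\<^sup>2 + r) * cnj \<omega> \<in> R" unfolding R_def using r0
      by (intro CollectI exI[of _ "t\<^sup>2 + r"]) auto
    moreover have "cmod (of_real (t\<^sup>2 + r) * cnj \<omega>) = t\<^sup>2 + r" using wn r0
      by (simp only: norm_mult norm_of_real wn complex_mod_cnj) (simp add: abs_of_nonneg)
    ultimately show ?thesis using that by metis
  next
    case False
    then have zz: "z = of_real t * cnj \<omega>" using zt by blast
    have "z\<^sup>2 + of_real r * \<omega> = of_real (t\<^sup>2 + r) * \<omega>"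
      using zz by (simp add: power_mult_distrib w2' distrib_right)
    moreover have "z\<^sup>2 + of_real r * \<omega> \<in> L" using inv[OF c2 zL] .
    moreover have "of_real (t\<^sup>2 + r) * \<omega> \<in> R" unfolding R_def using r0
      by (intro CollectI exI[of _ "t\<^sup>2 + r"]) auto
    moreover have "cmod (of_real (t\<^sup>2 + r) * \<omega>) = t\<^sup>2 + r" using wn r0
      by (simp only: norm_mult norm_of_real wn complex_mod_cnj) (simp add: abs_of_nonneg)
    ultimately show ?thesis using that by metis
  qed
  have "cmod w \<in> S" unfolding S_def using wL wR by blast
  then have "t\<^sup>2 + r \<le> Sup S" using cSup_upper[OF _ bS] wn' by simp
  moreover have "(t - 1/2)\<^sup>2 \<ge> 0" by simp
  then have "t \<le> t*t + 1/4" by (simp add: power2_eq_square algebra_simps)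
  then have "t\<^sup>2 + r \<ge> t + 2*\<eta>" 
  proof -
    have "2*\<eta> = r - 1/4" by (simp add: \<eta>_def)
    then show ?thesis using \<open>t \<le> t*t + 1/4\<close> by (simp add: power2_eq_square)
  qed
  ultimately show False using zs tz eta by simp
qed
lemma fixpt:
  fixes \<epsilon> :: real assumes "0 < \<epsilon>"
  shows "\<exists>L. planar_minimal_set (G (- complex_of_real \<epsilon>) 0) L"
proof -
  define q where "q = sqrt (1 + 4*\<epsilon>)"
  have ss: "q*q = 1 + 4*\<epsilon>" unfolding q_def using assms by simp
  define p where "p = complex_of_real ((1 - q)/2)"
  have qp: "quad (- complex_of_real \<epsilon>) p = p"
  proof -
    have re_eq: "((1 - q)/2)^2 - \<epsilon> = (1 - q)/2"
      by (simp add: power2_eq_square field_simps ss)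
    have "quad (- complex_of_real \<epsilon>) p = complex_of_real (((1 - q)/2)^2 - \<epsilon>)"
      by (simp add: quad_def p_def)
    also have "\<dots> = p" unfolding re_eq p_def ..
    finally show ?thesis .
  qed
  have gp: "g p = p" if "g \<in> G (- complex_of_real \<epsilon>) 0" for g
    using that unfolding G_def
  proof (induction rule: gen_semigroup.induct)
    case (gen f)
    then obtain c' where "f = quad c'" "c' + complex_of_real \<epsilon> = 0" by auto
    then have "c' = - complex_of_real \<epsilon>" by (simp add: add_eq_0_iff)
    then show ?case using qp \<open>f = quad c'\<close> by simp
  next
    case (comp g h)
    then show ?case by simp
  qed
  have "planar_minimal_set (G (- complex_of_real \<epsilon>) 0) {p}"
    unfolding planar_minimal_set_def invariant_compact_def using gp by auto
  then show ?thesis by blast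
qed

theorem theorem4p14:
  fixes \<epsilon> :: real
  assumes "0 < \<epsilon>" and "\<epsilon> \<le> 1/2"
  shows "r_bif (- complex_of_real \<epsilon>) \<le> 1/4 + \<epsilon> - \<epsilon>\<^sup>2"
  unfolding r_bif_def
proof (rule cSup_least)
  show "{r. r \<ge> 0 \<and> (\<exists>L. planar_minimal_set (G (- complex_of_real \<epsilon>) r) L)} \<noteq> {}"
    using fixpt[OF assms(1)] by blast
next
  fix r assume "r \<in> {r. r \<ge> 0 \<and> (\<exists>L. planar_minimal_set (G (- complex_of_real \<epsilon>) r) L)}"
  then obtain L where L: "planar_minimal_set (G (- complex_of_real \<epsilon>) r) L" by blast
  then have ic: "L \<noteq> {}" "compact L" "\<And>g. g \<in> G (- complex_of_real \<epsilon>) r \<Longrightarrow> g ` L \<subseteq> L"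
    unfolding planar_minimal_set_def invariant_compact_def by auto
  show "r \<le> 1/4 + \<epsilon> - \<epsilon>\<^sup>2"
  proof (rule ccontr)
    assume "\<not> r \<le> 1/4 + \<epsilon> - \<epsilon>\<^sup>2"
    then have rb: "r > 1/4 + \<epsilon> - \<epsilon>\<^sup>2" by simp
    have inv: "z\<^sup>2 + c \<in> L" if "cmod (c + of_real \<epsilon>) \<le> r" "z \<in> L" for c z
    proof -
      have "quad c \<in> G (- complex_of_real \<epsilon>) r"
        unfolding G_def by (rule gen_semigroup.gen) (use that(1) in auto)
      then have "quad c ` L \<subseteq> L" by (rule ic(3))
      then show ?thesis using that(2) by (auto simp: quad_def)
    qed
    show False by (rule core[OF assms rb ic(1,2) inv])
  qed
qed

end
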